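(* Let $\mathcal X=\{1,\dots,n\}$, $N\ge 1$, and for $t=0,\dots,N-1$ let $M(t)=[m_{ij}(t)]_{i,j=1}^n$ be matrices with nonnegative entries such that the product $M(N-1)M(N-2)\cdots M(0)$ has all entries positive. Let $\nu_0,\nu_N$ be probability distributions on $\mathcal X$, and let $\varphi,\hat\varphi$ be nonnegative functions on $\{0,\dots,N\}\times\mathcal X$ solving the Schrödinger system $\varphi(t,i)=\sum_j m_{ij}(t)\varphi(t+1,j)$, $\hat\varphi(t+1,j)=\sum_i m_{ij}(t)\hat\varphi(t,i)$ ($0\le t\le N-1$), $\varphi(0,x)\hat\varphi(0,x)=\nu_0(x)$, $\varphi(N,x)\hat\varphi(N,x)=\nu_N(x)$, with $\varphi>0$, and let $\Pi(t)=\operatorname{diag}(\varphi(t))^{-1}M(t)\operatorname{diag}(\varphi(t+1))$ be the one-step transition matrices of the bridge $\mathfrak M^*[\nu_0,\nu_N]$. Then for any probability distributions $\rho_0,\rho_N$ on $\mathcal X$, the solution of the Schrödinger bridge problem with marginals $\rho_0,\rho_N$ and prior transition matrices $\Pi(t)$ coincides with the solution of the Schrödinger bridge problem with marginals $\rho_0,\rho_N$ and prior transition matrices $M(t)$; i.e. both have initial marginal $\rho_0$ and the same transition matrices $Q^*(t)=\operatorname{diag}(\psi_1(t))^{-1}M(t)\operatorname{diag}(\psi_1(t+1))$, where $(\psi_1,\hat\psi_1)$ solves the Schrödinger system for $M(t)$ with boundary data $\rho_0,\rho_N$.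
   Context: Schrödinger bridge problem (SBP): given nonnegative weights $m_{ij}(t)$ and a positive initial measure $\mu_0$ on $\mathcal X$, the prior is the (not necessarily probability) measure on paths $x=(x_0,\dots,x_N)\in\mathcal X^{N+1}$ given by $\mathfrak M(x)=\mu_0(x_0)m_{x_0x_1}(0)\cdots m_{x_{N-1}x_N}(N-1)$. For probability distributions $\nu_0,\nu_N$ on $\mathcal X$, the SBP asks for the minimizer $\mathfrak M^*[\nu_0,\nu_N]$ of the relative entropy $\mathbb D(P\|\mathfrak M)=\sum_x P(x)\log\frac{P(x)}{\mathfrak M(x)}$ (equal to $+\infty$ if the support of $P$ is not contained in that of $\mathfrak M$, with $0\log 0=0$) over probability distributions $P$ on paths with initial marginal $\nu_0$ and final marginal $\nu_N$. When the product $M(N-1)\cdots M(0)$ is entrywise positive, the solution is unique and is the Markov measure $\nu_0(x_0)\pi_{x_0x_1}(0)\cdots\pi_{x_{N-1}x_N}(N-1)$ with $\pi_{ij}(t)=m_{ij}(t)\varphi(t+1,j)/\varphi(t,i)$, $\varphi,\hat\varphi$ solving the Schrödinger system stated in the claim. The solution does not depend on the choice of positive initial measure $\mu_0$ of the prior. *)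

theory Defs
  imports "HOL-Analysis.Analysis"
begin

text \<open>State space: a finite type 'x (playing the role of {1..n}).
  Paths x = (x_0,...,x_N) are extensional functions on {0..N}.\<close>

definition paths :: "nat \<Rightarrow> (nat \<Rightarrow> 'x) set" where
  "paths N = PiE {..N} (\<lambda>_. UNIV)"

definition prior_meas :: "('x \<Rightarrow> real) \<Rightarrow> (nat \<Rightarrow> 'x \<Rightarrow> 'x \<Rightarrow> real) \<Rightarrow> nat \<Rightarrow> (nat \<Rightarrow> 'x) \<Rightarrow> real" where
  "prior_meas mu0 m N x = mu0 (x 0) * (\<Prod>t<N. m t (x t) (x (Suc t)))"

definition rel_entropy :: "nat \<Rightarrow> ((nat \<Rightarrow> 'x) \<Rightarrow> real) \<Rightarrow> ((nat \<Rightarrow> 'x) \<Rightarrow> real) \<Rightarrow> ereal" where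
  "rel_entropy N P Q =
     (if \<forall>x\<in>paths N. P x \<noteq> 0 \<longrightarrow> Q x \<noteq> 0
      then ereal (\<Sum>x\<in>paths N. if P x = 0 then 0 else P x * ln (P x / Q x))
      else \<infinity>)"

definition prob_dist :: "('x::finite \<Rightarrow> real) \<Rightarrow> bool" where
  "prob_dist p \<longleftrightarrow> (\<forall>x. 0 \<le> p x) \<and> (\<Sum>x\<in>UNIV. p x) = 1"

definition path_marg :: "nat \<Rightarrow> ((nat \<Rightarrow> 'x) \<Rightarrow> real) \<Rightarrow> nat \<Rightarrow> 'x \<Rightarrow> real" where
  "path_marg N P t y = (\<Sum>x\<in>{x\<in>paths N. x t = y}. P x)"

definition admissible :: "nat \<Rightarrow> ('x \<Rightarrow> real) \<Rightarrow> ('x \<Rightarrow> real) \<Rightarrow> ((nat \<Rightarrow> 'x) \<Rightarrow> real) \<Rightarrow> bool" where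
  "admissible N rho0 rhoN P \<longleftrightarrow>
     (\<forall>x\<in>paths N. 0 \<le> P x) \<and> (\<forall>x. x \<notin> paths N \<longrightarrow> P x = 0) \<and>
     (\<Sum>x\<in>paths N. P x) = 1 \<and>
     path_marg N P 0 = rho0 \<and> path_marg N P N = rhoN"

definition SB_solution :: "('x \<Rightarrow> real) \<Rightarrow> (nat \<Rightarrow> 'x \<Rightarrow> 'x \<Rightarrow> real) \<Rightarrow> nat \<Rightarrow>
    ('x \<Rightarrow> real) \<Rightarrow> ('x \<Rightarrow> real) \<Rightarrow> ((nat \<Rightarrow> 'x) \<Rightarrow> real) \<Rightarrow> bool" where
  "SB_solution mu0 m N rho0 rhoN P \<longleftrightarrow>
     admissible N rho0 rhoN P \<and>
     (\<forall>Q. admissible N rho0 rhoN Q \<longrightarrow>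
        rel_entropy N P (prior_meas mu0 m N) \<le> rel_entropy N Q (prior_meas mu0 m N))"

text \<open>mat_chain m k = M(k-1) M(k-2) ... M(0).\<close>
fun mat_chain :: "(nat \<Rightarrow> 'x::finite \<Rightarrow> 'x \<Rightarrow> real) \<Rightarrow> nat \<Rightarrow> 'x \<Rightarrow> 'x \<Rightarrow> real" where
  "mat_chain m 0 = (\<lambda>i j. if i = j then 1 else 0)"
| "mat_chain m (Suc k) = (\<lambda>i j. \<Sum>l\<in>UNIV. m k i l * mat_chain m k l j)"

definition schroedinger_system :: "(nat \<Rightarrow> 'x::finite \<Rightarrow> 'x \<Rightarrow> real) \<Rightarrow> nat \<Rightarrow>
    ('x \<Rightarrow> real) \<Rightarrow> ('x \<Rightarrow> real) \<Rightarrow> (nat \<Rightarrow> 'x \<Rightarrow> real) \<Rightarrow> (nat \<Rightarrow> 'x \<Rightarrow> real) \<Rightarrow> bool" where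
  "schroedinger_system m N nu0 nuN phi phih \<longleftrightarrow>
     (\<forall>t<N. \<forall>i. phi t i = (\<Sum>j\<in>UNIV. m t i j * phi (Suc t) j)) \<and>
     (\<forall>t<N. \<forall>j. phih (Suc t) j = (\<Sum>i\<in>UNIV. m t i j * phih t i)) \<and>
     (\<forall>x. phi 0 x * phih 0 x = nu0 x) \<and>
     (\<forall>x. phi N x * phih N x = nuN x)"

definition bridge_trans :: "(nat \<Rightarrow> 'x \<Rightarrow> 'x \<Rightarrow> real) \<Rightarrow> (nat \<Rightarrow> 'x \<Rightarrow> real) \<Rightarrow> nat \<Rightarrow> 'x \<Rightarrow> 'x \<Rightarrow> real" where
  "bridge_trans m phi t i j = m t i j * phi (Suc t) j / phi t i"

definition markov_meas :: "('x \<Rightarrow> real) \<Rightarrow> (nat \<Rightarrow> 'x \<Rightarrow> 'x \<Rightarrow> real) \<Rightarrow> nat \<Rightarrow> (nat \<Rightarrow> 'x) \<Rightarrow> real" where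
  "markov_meas rho0 q N x =
     (if x \<in> paths N then rho0 (x 0) * (\<Prod>t<N. q t (x t) (x (Suc t))) else 0)"

end

theory Submission imports Defs begin

lemma finite_paths: "finite (paths N :: (nat \<Rightarrow> 'x::finite) set)"
  unfolding paths_def by (rule finite_PiE) auto

lemma sum_paths_Suc:
  fixes F :: "(nat \<Rightarrow> 'x::finite) \<Rightarrow> 'a::comm_monoid_add"
  shows "(\<Sum>x\<in>paths (Suc n). F x) = (\<Sum>y\<in>paths n. \<Sum>a\<in>UNIV. F (y(Suc n := a)))"
proof -
  have e: "paths (Suc n) = (\<lambda>(a, g). g(Suc n := a)) ` ((UNIV::'x set) \<times> paths n)"
    unfolding paths_def atMost_Suc by (rule PiE_insert_eq)
  have i: "inj_on (\<lambda>(a, g). g(Suc n := a)) ((UNIV::'x set) \<times> paths n)"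
    unfolding paths_def using inj_combinator[of "Suc n" "{..n}" "\<lambda>_. UNIV::'x set"] by simp
  have "(\<Sum>x\<in>paths (Suc n). F x) = (\<Sum>p\<in>(UNIV::'x set) \<times> paths n. F ((\<lambda>(a, g). g(Suc n := a)) p))"
    unfolding e using sum.reindex[OF i] by (simp add: case_prod_beta)
  also have "\<dots> = (\<Sum>a\<in>UNIV. \<Sum>y\<in>paths n. F (y(Suc n := a)))"
    by (simp add: sum.cartesian_product case_prod_beta)
  also have "\<dots> = (\<Sum>y\<in>paths n. \<Sum>a\<in>UNIV. F (y(Suc n := a)))"
    by (rule sum.swap)
  finally show ?thesis .
qed

lemma sum_paths_0:
  fixes F :: "(nat \<Rightarrow> 'x::finite) \<Rightarrow> 'a::comm_monoid_add"
  shows "(\<Sum>x\<in>paths 0. F x) = (\<Sum>a\<in>UNIV. F ((\<lambda>_. undefined)(0 := a)))"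
proof -
  have e: "paths 0 = (\<lambda>(a, g). g(0 := a)) ` ((UNIV::'x set) \<times> PiE {} (\<lambda>_. UNIV))"
    unfolding paths_def using PiE_insert_eq[of 0 "{}" "\<lambda>_. UNIV::'x set"] by simp
  have i: "inj_on (\<lambda>(a, g). g(0 := a)) ((UNIV::'x set) \<times> PiE {} (\<lambda>_. UNIV::'x set))"
    using inj_combinator[of "0" "{}" "\<lambda>_. UNIV::'x set"] by simp
  show ?thesis
    unfolding e sum.reindex[OF i]
    using sum.cartesian_product[where A=UNIV and B="{\<lambda>x. undefined}" and g="\<lambda>a g. F (g(0:=a))"]
    by (simp add: split_def o_def fun_upd_def)
qed

fun fwd :: "('x::finite \<Rightarrow> real) \<Rightarrow> (nat \<Rightarrow> 'x \<Rightarrow> 'x \<Rightarrow> real) \<Rightarrow> nat \<Rightarrow> 'x \<Rightarrow> real" where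
  "fwd f w 0 = f"
| "fwd f w (Suc n) = (\<lambda>j. \<Sum>i\<in>UNIV. fwd f w n i * w n i j)"

lemma path_sum:
  fixes f g :: "'x::finite \<Rightarrow> real"
  shows "(\<Sum>x\<in>paths n. f (x 0) * (\<Prod>t<n. w t (x t) (x (Suc t))) * g (x n))
       = (\<Sum>j\<in>UNIV. fwd f w n j * g j)"
proof (induction n arbitrary: g)
  case 0
  show ?case by (simp add: sum_paths_0)
next
  case (Suc n)
  have "(\<Sum>x\<in>paths (Suc n). f (x 0) * (\<Prod>t<Suc n. w t (x t) (x (Suc t))) * g (x (Suc n)))
     = (\<Sum>y\<in>paths n. \<Sum>a\<in>UNIV. f (y 0) * (\<Prod>t<n. w t (y t) (y (Suc t))) * (w n (y n) a * g a))"
  proof -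
    have "\<And>y a. (\<Prod>t<n. w t ((y(Suc n := a)) t) ((y(Suc n := a)) (Suc t))) = (\<Prod>t<n. w t (y t) (y (Suc t)))"
      by (rule prod.cong) auto
    then show ?thesis unfolding sum_paths_Suc by (simp add: mult_ac)
  qed
  also have "\<dots> = (\<Sum>a\<in>UNIV. \<Sum>y\<in>paths n. f (y 0) * (\<Prod>t<n. w t (y t) (y (Suc t))) * (w n (y n) a * g a))"
    by (rule sum.swap)
  also have "\<dots> = (\<Sum>a\<in>UNIV. \<Sum>j\<in>UNIV. fwd f w n j * (w n j a * g a))"
    apply (rule sum.cong[OF refl])
    subgoal for a using Suc.IH[of "\<lambda>j. w n j a * g a"] by (simp add: mult.assoc)
    done
  also have "\<dots> = (\<Sum>a\<in>UNIV. fwd f w (Suc n) a * g a)"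
    by (simp add: sum_distrib_left sum_distrib_right mult_ac)
  finally show ?case .
qed


lemma marg_sum:
  fixes Q :: "(nat \<Rightarrow> 'x::finite) \<Rightarrow> real"
  shows "(\<Sum>x\<in>paths N. Q x * h (x t)) = (\<Sum>y\<in>UNIV. path_marg N Q t y * h y)"
proof -
  have "(\<Sum>y\<in>UNIV. path_marg N Q t y * h y) = (\<Sum>y\<in>UNIV. \<Sum>x\<in>{x\<in>paths N. x t = y}. Q x * h (x t))"
    unfolding path_marg_def sum_distrib_right by (intro sum.cong) auto
  also have "\<dots> = (\<Sum>x\<in>paths N. Q x * h (x t))"
    by (rule sum.group) (auto simp: finite_paths)
  finally show ?thesis by simp
qed

lemma telescope:
  assumes "\<forall>t\<le>n. u t \<noteq> (0::real)"
  shows "(\<Prod>t<n. c t * u (Suc t) / u t) = (\<Prod>t<n. c t) * u n / u 0"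
  using assms
proof (induction n)
  case 0 then show ?case by simp
next
  case (Suc n)
  then have "u n \<noteq> 0" by auto
  with Suc show ?case by (simp add: field_simps)
qed

lemma adm_pos_marg:
  fixes Q :: "(nat \<Rightarrow> 'x::finite) \<Rightarrow> real"
  assumes adm: "admissible N rho0 rhoN Q" and x: "x \<in> paths N" and q: "Q x \<noteq> 0"
  shows "0 < rho0 (x 0)"
proof -
  have nn: "\<forall>y\<in>paths N. 0 \<le> Q y" using adm unfolding admissible_def by auto
  have "Q x \<le> (\<Sum>y\<in>{y\<in>paths N. y 0 = x 0}. Q y)"
    by (rule member_le_sum) (use x nn in \<open>auto intro: finite_subset[OF _ finite_paths]\<close>)
  also have "\<dots> = rho0 (x 0)" using adm unfolding admissible_def path_marg_def by auto
  finally show ?thesis using nn x q by force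
qed

lemma tilt:
  fixes Q R S :: "(nat \<Rightarrow> 'x::finite) \<Rightarrow> real"
  assumes adm: "admissible N rho0 rhoN Q"
    and R: "\<forall>x\<in>paths N. 0 \<le> R x"
    and S: "\<forall>x\<in>paths N. S x = R x * a (x 0) * b (x N)"
    and a: "\<forall>i. 0 \<le> a i" and b: "\<forall>j. 0 < b j"
    and az: "\<forall>i. a i = 0 \<longrightarrow> rho0 i = 0"
  shows "rel_entropy N Q R = rel_entropy N Q S
           + ereal ((\<Sum>i\<in>UNIV. rho0 i * ln (a i)) + (\<Sum>j\<in>UNIV. rhoN j * ln (b j)))"
proof -
  have nn: "\<forall>y\<in>paths N. 0 \<le> Q y" using adm unfolding admissible_def by auto
  have apos: "0 < a (x 0)" if "x \<in> paths N" "Q x \<noteq> 0" for x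
  proof -
    have "a (x 0) \<noteq> 0" using adm_pos_marg[OF adm that] az by auto
    then show ?thesis using a by (simp add: less_le)
  qed
  have supp: "R x \<noteq> 0 \<longleftrightarrow> S x \<noteq> 0" if "x \<in> paths N" "Q x \<noteq> 0" for x
    using apos[OF that] b[rule_format, of "x N"] S that by auto
  show ?thesis
  proof (cases "\<forall>x\<in>paths N. Q x \<noteq> 0 \<longrightarrow> R x \<noteq> 0")
    case False
    then have "\<not> (\<forall>x\<in>paths N. Q x \<noteq> 0 \<longrightarrow> S x \<noteq> 0)" using supp by auto
    with False show ?thesis unfolding rel_entropy_def by simp
  next
    case True
    then have T2: "\<forall>x\<in>paths N. Q x \<noteq> 0 \<longrightarrow> S x \<noteq> 0" using supp by auto
    have tm: "(if Q x = 0 then 0 else Q x * ln (Q x / R x))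
        = (if Q x = 0 then 0 else Q x * ln (Q x / S x)) + (Q x * ln (a (x 0)) + Q x * ln (b (x N)))"
      if x: "x \<in> paths N" for x
    proof (cases "Q x = 0")
      case True then show ?thesis by simp
    next
      case False
      have q: "0 < Q x" using nn x False by force
      have r: "0 < R x" using R x True False by force
      have ap: "0 < a (x 0)" using apos x False by auto
      have bp: "0 < b (x N)" using b by auto
      have "ln (Q x / S x) = ln (Q x) - ln (R x) - ln (a (x 0)) - ln (b (x N))"
        using S x q r ap bp by (simp add: ln_div ln_mult)
      moreover have "ln (Q x / R x) = ln (Q x) - ln (R x)" using q r by (simp add: ln_div)
      ultimately have "ln (Q x / R x) = ln (Q x / S x) + ln (a (x 0)) + ln (b (x N))" by linarith
      then show ?thesis using False by (simp add: algebra_simps)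
    qed
    have "(\<Sum>x\<in>paths N. if Q x = 0 then 0 else Q x * ln (Q x / R x))
      = (\<Sum>x\<in>paths N. if Q x = 0 then 0 else Q x * ln (Q x / S x))
        + ((\<Sum>x\<in>paths N. Q x * ln (a (x 0))) + (\<Sum>x\<in>paths N. Q x * ln (b (x N))))"
      by (simp add: tm sum.distrib)
    also have "(\<Sum>x\<in>paths N. Q x * ln (a (x 0))) = (\<Sum>i\<in>UNIV. rho0 i * ln (a i))"
      using marg_sum[where N=N and Q=Q and h="\<lambda>i. ln (a i)" and t=0] adm unfolding admissible_def by simp
    also have "(\<Sum>x\<in>paths N. Q x * ln (b (x N))) = (\<Sum>j\<in>UNIV. rhoN j * ln (b j))"
      using marg_sum[where N=N and Q=Q and h="\<lambda>i. ln (b i)" and t=N] adm unfolding admissible_def by simp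
    finally show ?thesis unfolding rel_entropy_def using True T2 by simp
  qed
qed

lemma gibbs:
  assumes adm: "admissible N rho0 rhoN Q" and P: "\<forall>x\<in>paths N. 0 \<le> P x"
    and P1: "(\<Sum>x\<in>paths N. P x) = 1"
  shows "0 \<le> rel_entropy N Q P"
proof (cases "\<forall>x\<in>paths N. Q x \<noteq> 0 \<longrightarrow> P x \<noteq> 0")
  case False then show ?thesis unfolding rel_entropy_def by auto
next
  case True
  have nn: "\<forall>y\<in>paths N. 0 \<le> Q y" and Q1: "(\<Sum>x\<in>paths N. Q x) = 1"
    using adm unfolding admissible_def by auto
  have t: "Q x - P x \<le> (if Q x = 0 then 0 else Q x * ln (Q x / P x))" if x: "x \<in> paths N" for x
  proof (cases "Q x = 0")
    case True then show ?thesis using P x by simp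
  next
    case False
    have q: "0 < Q x" using nn x False by force
    have p: "0 < P x" using P x True False by force
    have "ln (P x / Q x) \<le> P x / Q x - 1" using q p by (intro ln_le_minus_one) simp
    then have "Q x * ln (P x / Q x) \<le> Q x * (P x / Q x - 1)" using q by (simp add: mult_left_mono)
    also have "\<dots> = P x - Q x" using q by (simp add: field_simps)
    finally have "Q x * ln (P x / Q x) \<le> P x - Q x" .
    moreover have "ln (Q x / P x) = - ln (P x / Q x)" using q p by (simp add: ln_div)
    ultimately show ?thesis using False by simp
  qed
  have "0 = (\<Sum>x\<in>paths N. Q x - P x)" using Q1 P1 by (simp add: sum_subtractf)
  also have "\<dots> \<le> (\<Sum>x\<in>paths N. if Q x = 0 then 0 else Q x * ln (Q x / P x))"
    by (rule sum_mono) (use t in auto)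
  finally show ?thesis unfolding rel_entropy_def using True by simp
qed

lemma fwd_mass:
  assumes "\<forall>t<n. \<forall>i. (\<Sum>j\<in>UNIV. w t i j) = 1"
  shows "(\<Sum>j\<in>UNIV. fwd f w n j) = (\<Sum>j\<in>UNIV. f j)"
  using assms
proof (induction n)
  case 0 then show ?case by simp
next
  case (Suc n)
  have "(\<Sum>j\<in>UNIV. fwd f w (Suc n) j) = (\<Sum>j\<in>UNIV. \<Sum>i\<in>UNIV. fwd f w n i * w n i j)" by simp
  also have "\<dots> = (\<Sum>i\<in>UNIV. \<Sum>j\<in>UNIV. fwd f w n i * w n i j)" by (rule sum.swap)
  also have "\<dots> = (\<Sum>i\<in>UNIV. fwd f w n i * (\<Sum>j\<in>UNIV. w n i j))" by (simp add: sum_distrib_left)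
  also have "\<dots> = (\<Sum>i\<in>UNIV. fwd f w n i)" using Suc.prems by simp
  finally show ?case using Suc by simp
qed


lemma fwd_psi:
  assumes sys: "schroedinger_system m N rho0 rhoN psi psih"
    and pos: "\<forall>t\<le>N. \<forall>x. 0 < psi t x"
  shows "n \<le> N \<Longrightarrow> fwd rho0 (bridge_trans m psi) n j = psi n j * psih n j"
proof (induction n arbitrary: j)
  case 0
  then show ?case using sys unfolding schroedinger_system_def by simp
next
  case (Suc n)
  have "fwd rho0 (bridge_trans m psi) (Suc n) j
      = (\<Sum>i\<in>UNIV. psi n i * psih n i * (m n i j * psi (Suc n) j / psi n i))"
    by (simp only: fwd.simps Suc.IH[OF Suc_leD[OF Suc.prems]] bridge_trans_def)
  also have "\<dots> = (\<Sum>i\<in>UNIV. psi (Suc n) j * (m n i j * psih n i))"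
  proof (rule sum.cong[OF refl])
    fix i
    have "psi n i \<noteq> 0" using pos Suc.prems by (metis Suc_leD less_irrefl)
    then show "psi n i * psih n i * (m n i j * psi (Suc n) j / psi n i) = psi (Suc n) j * (m n i j * psih n i)"
      by (simp add: field_simps)
  qed
  also have "\<dots> = psi (Suc n) j * psih (Suc n) j"
    using sys Suc.prems unfolding schroedinger_system_def by (simp add: sum_distrib_left[symmetric])
  finally show ?case .
qed


lemma rel_entropy_self: "rel_entropy N P P = 0"
proof -
  have "(\<Sum>x\<in>paths N. if P x = 0 then 0 else P x * ln (P x / P x)) = 0"
    by (rule sum.neutral) auto
  then show ?thesis unfolding rel_entropy_def by (simp add: zero_ereal_def)
qed

theorem mainTheorem1:
  fixes m :: "nat \<Rightarrow> 'x::finite \<Rightarrow> 'x \<Rightarrow> real"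
    and N :: nat
    and nu0 nuN rho0 rhoN mu0 mu0' :: "'x \<Rightarrow> real"
    and phi phih :: "nat \<Rightarrow> 'x \<Rightarrow> real"
  assumes "N \<ge> 1"
    and "\<forall>t<N. \<forall>i j. 0 \<le> m t i j"
    and "\<forall>i j. 0 < mat_chain m N i j"
    and "prob_dist nu0" and "prob_dist nuN"
    and "schroedinger_system m N nu0 nuN phi phih"
    and "\<forall>t\<le>N. \<forall>x. 0 < phi t x \<and> 0 \<le> phih t x"
    and "prob_dist rho0" and "prob_dist rhoN"
    and "\<forall>x. 0 < mu0 x" and "\<forall>x. 0 < mu0' x"
  shows "(\<forall>P. SB_solution mu0' (bridge_trans m phi) N rho0 rhoN P
              \<longleftrightarrow> SB_solution mu0 m N rho0 rhoN P)
       \<and> (\<forall>psi psih. schroedinger_system m N rho0 rhoN psi psih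
              \<and> (\<forall>t\<le>N. \<forall>x. 0 < psi t x \<and> 0 \<le> psih t x)
            \<longrightarrow> SB_solution mu0' (bridge_trans m phi) N rho0 rhoN
                   (markov_meas rho0 (bridge_trans m psi) N)
              \<and> SB_solution mu0 m N rho0 rhoN
                   (markov_meas rho0 (bridge_trans m psi) N))"
proof -
  note mnn = assms(2)
  note sysphi = assms(6)
  have phipos: "\<forall>t\<le>N. \<forall>x. 0 < phi t x" using assms(7) by auto
  note mu0pos = assms(10) and mu0'pos = assms(11)
  have rho0nn: "\<forall>i. 0 \<le> rho0 i" and rho01: "(\<Sum>i\<in>UNIV. rho0 i) = 1"
    using assms(8) unfolding prob_dist_def by auto
  define R2 where "R2 = prior_meas mu0 m N"
  define R1 where "R1 = prior_meas mu0' (bridge_trans m phi) N"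
  have R2nn: "\<forall>x\<in>paths N. 0 \<le> R2 x"
    unfolding R2_def prior_meas_def
  proof
    fix x :: "nat \<Rightarrow> 'x"
    have "0 \<le> mu0 (x 0)" using mu0pos less_imp_le by blast
    moreover have "0 \<le> (\<Prod>t<N. m t (x t) (x (Suc t)))" by (rule prod_nonneg) (use mnn in auto)
    ultimately show "0 \<le> mu0 (x 0) * (\<Prod>t<N. m t (x t) (x (Suc t)))" by simp
  qed
  have tele: "(\<Prod>t<N. bridge_trans m ps t (x t) (x (Suc t)))
      = (\<Prod>t<N. m t (x t) (x (Suc t))) * ps N (x N) / ps 0 (x 0)"
    if "\<forall>t\<le>N. \<forall>x. 0 < ps t x" for ps and x :: "nat \<Rightarrow> 'x"
    unfolding bridge_trans_def
    by (rule telescope[where u="\<lambda>t. ps t (x t)" and c="\<lambda>t. m t (x t) (x (Suc t))"])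
       (use that in \<open>auto simp: less_le\<close>)
  define a1 where "a1 i = mu0' i / (mu0 i * phi 0 i)" for i
  have R1eq: "\<forall>x\<in>paths N. R1 x = R2 x * a1 (x 0) * phi N (x N)"
  proof
    fix x :: "nat \<Rightarrow> 'x" assume "x \<in> paths N"
    have "mu0 (x 0) \<noteq> 0" "phi 0 (x 0) \<noteq> 0" using mu0pos phipos by (auto simp: less_le)
    then show "R1 x = R2 x * a1 (x 0) * phi N (x N)"
      unfolding R1_def R2_def prior_meas_def a1_def tele[OF phipos]
      by (simp add: field_simps)
  qed
  define C1 where "C1 = (\<Sum>i\<in>UNIV. rho0 i * ln (a1 i)) + (\<Sum>j\<in>UNIV. rhoN j * ln (phi N j))"
  have key1: "rel_entropy N Q R2 = rel_entropy N Q R1 + ereal C1"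
    if "admissible N rho0 rhoN Q" for Q
    unfolding C1_def
  proof (rule tilt[OF that R2nn R1eq])
    show "\<forall>i. 0 \<le> a1 i" unfolding a1_def using mu0pos mu0'pos phipos
      by (auto intro!: divide_nonneg_pos less_imp_le mult_pos_pos)
    show "\<forall>j. 0 < phi N j" using phipos by auto
    show "\<forall>i. a1 i = 0 \<longrightarrow> rho0 i = 0" unfolding a1_def using mu0pos mu0'pos phipos
      by (auto simp: less_le)
  qed
  have part1: "\<forall>P. SB_solution mu0' (bridge_trans m phi) N rho0 rhoN P
              \<longleftrightarrow> SB_solution mu0 m N rho0 rhoN P"
  proof (intro allI)
    fix P
    have "(rel_entropy N P R1 \<le> rel_entropy N Q R1) \<longleftrightarrow> (rel_entropy N P R2 \<le> rel_entropy N Q R2)"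
      if "admissible N rho0 rhoN P" "admissible N rho0 rhoN Q" for Q
      using key1[OF that(1)] key1[OF that(2)] by (simp add: ereal_add_le_add_iff2)
    then show "SB_solution mu0' (bridge_trans m phi) N rho0 rhoN P
              \<longleftrightarrow> SB_solution mu0 m N rho0 rhoN P"
      unfolding SB_solution_def R1_def[symmetric] R2_def[symmetric] by blast
  qed
  have part2: "SB_solution mu0 m N rho0 rhoN (markov_meas rho0 (bridge_trans m psi) N)"
    if sys: "schroedinger_system m N rho0 rhoN psi psih"
      and pp: "\<forall>t\<le>N. \<forall>x. 0 < psi t x \<and> 0 \<le> psih t x" for psi psih
  proof -
    have psipos: "\<forall>t\<le>N. \<forall>x. 0 < psi t x" using pp by auto
    define q where "q = bridge_trans m psi"
    define PS where "PS = markov_meas rho0 q N"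
    have qnn: "\<forall>t<N. \<forall>i j. 0 \<le> q t i j"
      unfolding q_def bridge_trans_def
    proof (intro allI impI)
      fix t i j assume t: "t < N"
      have "0 \<le> m t i j" using mnn t by auto
      moreover have "0 < psi (Suc t) j" "0 < psi t i" using psipos t by auto
      ultimately show "0 \<le> m t i j * psi (Suc t) j / psi t i" by simp
    qed
    have rows: "\<forall>t<N. \<forall>i. (\<Sum>j\<in>UNIV. q t i j) = 1"
    proof (intro allI impI)
      fix t i assume t: "t < N"
      have ne: "psi t i \<noteq> 0" using psipos t by (auto simp: less_le)
      have "(\<Sum>j\<in>UNIV. q t i j) = (\<Sum>j\<in>UNIV. m t i j * psi (Suc t) j) / psi t i"
        unfolding q_def bridge_trans_def by (simp add: sum_divide_distrib)
      also have "\<dots> = 1" using sys t ne unfolding schroedinger_system_def by simp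
      finally show "(\<Sum>j\<in>UNIV. q t i j) = 1" .
    qed
    have PSp: "PS x = rho0 (x 0) * (\<Prod>t<N. q t (x t) (x (Suc t))) * 1" if "x \<in> paths N" for x
      unfolding PS_def markov_meas_def using that by simp
    have sumPS: "(\<Sum>x\<in>paths N. PS x) = 1"
    proof -
      have "(\<Sum>x\<in>paths N. PS x) = (\<Sum>x\<in>paths N. rho0 (x 0) * (\<Prod>t<N. q t (x t) (x (Suc t))) * (\<lambda>_. 1) (x N))"
        using PSp by (intro sum.cong) auto
      also have "\<dots> = (\<Sum>j\<in>UNIV. fwd rho0 q N j)" using path_sum[where f=rho0 and w=q and n=N and g="\<lambda>_. 1"] by simp
      also have "\<dots> = 1" using fwd_mass[OF rows] rho01 by simp
      finally show ?thesis .
    qed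
    have marg0: "path_marg N PS 0 = rho0"
    proof
      fix i
      define f where "f k = (if k = i then rho0 k else 0)" for k
      have "path_marg N PS 0 i = (\<Sum>x\<in>paths N. if x 0 = i then PS x else 0)"
        unfolding path_marg_def by (simp add: sum.inter_filter finite_paths)
      also have "\<dots> = (\<Sum>x\<in>paths N. f (x 0) * (\<Prod>t<N. q t (x t) (x (Suc t))) * (\<lambda>_. 1) (x N))"
        using PSp by (intro sum.cong) (auto simp: f_def)
      also have "\<dots> = (\<Sum>j\<in>UNIV. fwd f q N j)" using path_sum[where f=f and w=q and n=N and g="\<lambda>_. 1"] by simp
      also have "\<dots> = (\<Sum>j\<in>UNIV. f j)" using fwd_mass[OF rows] by simp
      also have "\<dots> = rho0 i" unfolding f_def by simp
      finally show "path_marg N PS 0 i = rho0 i" .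
    qed
    have margN: "path_marg N PS N = rhoN"
    proof
      fix j
      have "path_marg N PS N j = (\<Sum>x\<in>paths N. if x N = j then PS x else 0)"
        unfolding path_marg_def by (simp add: sum.inter_filter finite_paths)
      also have "\<dots> = (\<Sum>x\<in>paths N. rho0 (x 0) * (\<Prod>t<N. q t (x t) (x (Suc t))) * (\<lambda>k. if k = j then 1 else 0) (x N))"
        using PSp by (intro sum.cong) auto
      also have "\<dots> = (\<Sum>k\<in>UNIV. fwd rho0 q N k * (if k = j then 1 else 0))" by (rule path_sum)
      also have "\<dots> = (\<Sum>k\<in>UNIV. if k = j then fwd rho0 q N k else 0)" by (rule sum.cong) auto
      also have "\<dots> = fwd rho0 q N j" by simp
      also have "\<dots> = psi N j * psih N j" unfolding q_def using fwd_psi[OF sys psipos] by simp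
      also have "\<dots> = rhoN j" using sys unfolding schroedinger_system_def by simp
      finally show "path_marg N PS N j = rhoN j" .
    qed
    have PSnn: "\<forall>x\<in>paths N. 0 \<le> PS x"
      using PSp rho0nn qnn by (auto intro!: mult_nonneg_nonneg prod_nonneg)
    have adm: "admissible N rho0 rhoN PS"
      unfolding admissible_def using PSnn sumPS marg0 margN
      by (auto simp: PS_def markov_meas_def)
    define a2 where "a2 i = rho0 i / (mu0 i * psi 0 i)" for i
    have PSeq: "\<forall>x\<in>paths N. PS x = R2 x * a2 (x 0) * psi N (x N)"
    proof
      fix x :: "nat \<Rightarrow> 'x" assume x: "x \<in> paths N"
      have "mu0 (x 0) \<noteq> 0" "psi 0 (x 0) \<noteq> 0" using mu0pos psipos by (auto simp: less_le)
      then show "PS x = R2 x * a2 (x 0) * psi N (x N)"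
        unfolding PSp[OF x] R2_def prior_meas_def a2_def q_def tele[OF psipos]
        by (simp add: field_simps)
    qed
    define C2 where "C2 = (\<Sum>i\<in>UNIV. rho0 i * ln (a2 i)) + (\<Sum>j\<in>UNIV. rhoN j * ln (psi N j))"
    have key2: "rel_entropy N Q R2 = rel_entropy N Q PS + ereal C2"
      if "admissible N rho0 rhoN Q" for Q
      unfolding C2_def
    proof (rule tilt[OF that R2nn PSeq])
      show "\<forall>i. 0 \<le> a2 i" unfolding a2_def using mu0pos rho0nn psipos
        by (auto intro!: divide_nonneg_pos mult_pos_pos)
      show "\<forall>j. 0 < psi N j" using psipos by auto
      show "\<forall>i. a2 i = 0 \<longrightarrow> rho0 i = 0" unfolding a2_def using mu0pos psipos
        by (auto simp: less_le)
    qed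
    have "rel_entropy N PS R2 \<le> rel_entropy N Q R2" if "admissible N rho0 rhoN Q" for Q
    proof -
      have "rel_entropy N PS R2 = 0 + ereal C2" using key2[OF adm] by (simp add: rel_entropy_self)
      also have "\<dots> \<le> rel_entropy N Q PS + ereal C2"
        by (rule add_right_mono) (rule gibbs[OF that PSnn sumPS])
      also have "\<dots> = rel_entropy N Q R2" using key2[OF that] by simp
      finally show ?thesis .
    qed
    then show ?thesis unfolding SB_solution_def PS_def[symmetric] q_def[symmetric] R2_def[symmetric]
      using adm by blast
  qed
  show ?thesis using part1 part2 by blast
qed

end
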